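(* Let $X$ be a complex $V$-space and let $f:Y\to X$ be a $V$-morphism from a reduced complex space $Y$. Then $d^V_X(f(p),f(q))\le d_Y(p,q)$ for any pair of distinct points $p,q\in Y$, where $d_Y$ is the Kobayashi pseudo-distance of $Y$.
   Context: Complex $V$-space: a reduced complex space $X$ with a collection of local Galois covers $(\pi_\alpha:\tilde U_\alpha\to U_\alpha,G_\alpha)_{\alpha\in I}$ ($\tilde U_\alpha$ connected complex space, $G_\alpha$ finite group acting biholomorphically with $\tilde U_\alpha/G_\alpha\cong U_\alpha$ open in $X$), the $U_\alpha$ forming a basis of the topology, such that if $U_\alpha\subset U_\beta$ there is an open embedding $\tilde j_{\alpha\beta}:\tilde U_\alpha\to\tilde U_\beta$ over the inclusion, equivariant with respect to an injective homomorphism $G_\alpha\to G_\beta$. A holomorphic map $f:Y\to X$ is a $V$-morphism if each point of $Y$ has a neighbourhood $\Omega$ on which $f=\pi_\alpha\circ\tau$ for some $\alpha$ and holomorphic $\tau:\Omega\to\tilde U_\alpha$. The Kobayashi pseudo $V$-distance $d^V_X(p,q)$ is the infimum of $\sum_i\rho(a_i,b_i)$ over chains of $V$-morphisms $f_i:\mathbb{D}\to X$ connecting $p$ to $q$ ($f_1(a_1)=p$, $f_i(b_i)=f_{i+1}(a_{i+1})$, $f_m(b_m)=q$), $\rho$ the Poincaré distance on the unit disk $\mathbb{D}$. *)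

theory Defs
  imports "HOL-Analysis.Analysis" "HOL-Algebra.Group"
begin

text \<open>Points of C^n are encoded as functions nat => complex vanishing from index n on.
  With the product topology on nat => complex, the subspace topology on cn n is
  the usual topology of C^n.\<close>

definition cn :: "nat \<Rightarrow> (nat \<Rightarrow> complex) set" where
  "cn n = {z. \<forall>i\<ge>n. z i = 0}"

definition cn_open :: "nat \<Rightarrow> (nat \<Rightarrow> complex) set \<Rightarrow> bool" where
  "cn_open n U \<longleftrightarrow> openin (top_of_set (cn n)) U"

text \<open>Holomorphic function on an open subset of C^n (Osgood: continuous and
  holomorphic in each variable separately).\<close>
definition holo_fun :: "nat \<Rightarrow> (nat \<Rightarrow> complex) set \<Rightarrow> ((nat \<Rightarrow> complex) \<Rightarrow> complex) \<Rightarrow> bool" where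
  "holo_fun n U h \<longleftrightarrow> cn_open n U \<and> continuous_on U h \<and>
     (\<forall>z\<in>U. \<forall>i<n. (\<lambda>t. h (z(i := t))) field_differentiable (at (z i)))"

definition analytic_set :: "nat \<Rightarrow> (nat \<Rightarrow> complex) set \<Rightarrow> (nat \<Rightarrow> complex) set \<Rightarrow> bool" where
  "analytic_set n D A \<longleftrightarrow> cn_open n D \<and> A \<subseteq> D \<and>
     (\<forall>z\<in>D. \<exists>W k fs. z \<in> W \<and> W \<subseteq> D \<and> cn_open n W \<and>
        (\<forall>j<(k::nat). holo_fun n W (fs j)) \<and> A \<inter> W = {w\<in>W. \<forall>j<k. fs j w = 0})"

definition holo_on_set :: "nat \<Rightarrow> (nat \<Rightarrow> complex) set \<Rightarrow> ((nat \<Rightarrow> complex) \<Rightarrow> complex) \<Rightarrow> bool" where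
  "holo_on_set n S g \<longleftrightarrow>
     (\<forall>z\<in>S. \<exists>W F. z \<in> W \<and> holo_fun n W F \<and> (\<forall>w\<in>W \<inter> S. g w = F w))"

definition holo_map :: "nat \<Rightarrow> (nat \<Rightarrow> complex) set \<Rightarrow> nat \<Rightarrow> ((nat \<Rightarrow> complex) \<Rightarrow> (nat \<Rightarrow> complex)) \<Rightarrow> bool" where
  "holo_map n S m g \<longleftrightarrow> (\<forall>z\<in>S. g z \<in> cn m) \<and> (\<forall>i<m. holo_on_set n S (\<lambda>z. g z i))"

text \<open>A chart (U, phi, n, D, A): U open in the space, phi a homeomorphism of U onto
  an analytic subset A of an open set D of C^n.\<close>
type_synonym 'a chart =
  "'a set \<times> ('a \<Rightarrow> (nat \<Rightarrow> complex)) \<times> nat \<times> (nat \<Rightarrow> complex) set \<times> (nat \<Rightarrow> complex) set"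

type_synonym 'a cspace = "'a topology \<times> 'a chart set"

abbreviation ctop :: "'a cspace \<Rightarrow> 'a topology" where "ctop X \<equiv> fst X"
abbreviation catlas :: "'a cspace \<Rightarrow> 'a chart set" where "catlas X \<equiv> snd X"
abbreviation cpts :: "'a cspace \<Rightarrow> 'a set" where "cpts X \<equiv> topspace (fst X)"

definition is_cspace :: "'a cspace \<Rightarrow> bool" where
  "is_cspace X \<longleftrightarrow> Hausdorff_space (ctop X) \<and>
     (\<forall>x\<in>cpts X. \<exists>(U,\<phi>,n,D,A)\<in>catlas X. x \<in> U) \<and>
     (\<forall>(U,\<phi>,n,D,A)\<in>catlas X. openin (ctop X) U \<and> analytic_set n D A \<and>
         homeomorphic_map (subtopology (ctop X) U) (top_of_set A) \<phi>) \<and>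
     (\<forall>(U1,\<phi>1,n1,D1,A1)\<in>catlas X. \<forall>(U2,\<phi>2,n2,D2,A2)\<in>catlas X.
         holo_map n1 (\<phi>1 ` (U1 \<inter> U2)) n2 (\<lambda>z. \<phi>2 (inv_into U1 \<phi>1 z)))"

definition hol_map_on :: "'b cspace \<Rightarrow> 'b set \<Rightarrow> 'a cspace \<Rightarrow> ('b \<Rightarrow> 'a) \<Rightarrow> bool" where
  "hol_map_on Y Om X f \<longleftrightarrow> openin (ctop Y) Om \<and>
     continuous_map (subtopology (ctop Y) Om) (ctop X) f \<and>
     (\<forall>(U,\<phi>,n,D,A)\<in>catlas Y. \<forall>(V,\<psi>,m,E,B)\<in>catlas X.
        holo_map n (\<phi> ` {y\<in>U \<inter> Om. f y \<in> V}) m (\<lambda>z. \<psi> (f (inv_into U \<phi> z))))"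

definition hol_fun_on :: "'a cspace \<Rightarrow> 'a set \<Rightarrow> ('a \<Rightarrow> complex) \<Rightarrow> bool" where
  "hol_fun_on X W h \<longleftrightarrow> openin (ctop X) W \<and>
     (\<forall>(U,\<phi>,n,D,A)\<in>catlas X. holo_on_set n (\<phi> ` (U \<inter> W)) (\<lambda>z. h (inv_into U \<phi> z)))"

definition hol_open_embedding :: "'b cspace \<Rightarrow> 'a cspace \<Rightarrow> ('b \<Rightarrow> 'a) \<Rightarrow> bool" where
  "hol_open_embedding A B j \<longleftrightarrow> hol_map_on A (cpts A) B j \<and> inj_on j (cpts A) \<and>
     openin (ctop B) (j ` cpts A) \<and> hol_map_on B (j ` cpts A) A (inv_into (cpts A) j)"

definition disc_chart :: "complex \<Rightarrow> (nat \<Rightarrow> complex)" where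
  "disc_chart z = (\<lambda>i. if i = 0 then z else 0)"

definition disc_space :: "complex cspace" where
  "disc_space = (top_of_set (ball 0 1),
      {(ball 0 1, disc_chart, 1, disc_chart ` ball 0 1, disc_chart ` ball 0 1)})"

definition hol_group_action :: "'u cspace \<Rightarrow> ('g, 'm) monoid_scheme \<Rightarrow> ('g \<Rightarrow> 'u \<Rightarrow> 'u) \<Rightarrow> bool" where
  "hol_group_action Y G act \<longleftrightarrow> group G \<and> finite (carrier G) \<and>
     (\<forall>g\<in>carrier G. hol_map_on Y (cpts Y) Y (act g)) \<and>
     (\<forall>x\<in>cpts Y. act \<one>\<^bsub>G\<^esub> x = x) \<and>
     (\<forall>g\<in>carrier G. \<forall>h\<in>carrier G. \<forall>x\<in>cpts Y. act (g \<otimes>\<^bsub>G\<^esub> h) x = act g (act h x))"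

text \<open>pi : Ut -> X is a local Galois cover with group G, i.e. Ut/G is isomorphic
  (as a reduced complex space, i.e. topologically and on holomorphic functions)
  to the open set pi(Ut) of X.\<close>
definition galois_cover :: "'a cspace \<Rightarrow> 'u cspace \<Rightarrow> ('g, 'm) monoid_scheme \<Rightarrow>
    ('g \<Rightarrow> 'u \<Rightarrow> 'u) \<Rightarrow> ('u \<Rightarrow> 'a) \<Rightarrow> bool" where
  "galois_cover X Ut G act \<pi> \<longleftrightarrow>
     is_cspace Ut \<and> connected_space (ctop Ut) \<and> hol_group_action Ut G act \<and>
     openin (ctop X) (\<pi> ` cpts Ut) \<and>
     hol_map_on Ut (cpts Ut) X \<pi> \<and>
     (\<forall>x\<in>cpts Ut. \<forall>y\<in>cpts Ut. \<pi> x = \<pi> y \<longleftrightarrow> (\<exists>g\<in>carrier G. act g x = y)) \<and>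
     (\<forall>W. W \<subseteq> \<pi> ` cpts Ut \<longrightarrow>
        (openin (ctop X) W \<longleftrightarrow> openin (ctop Ut) {x\<in>cpts Ut. \<pi> x \<in> W})) \<and>
     (\<forall>W h. openin (ctop X) W \<and> W \<subseteq> \<pi> ` cpts Ut \<longrightarrow>
        (hol_fun_on X W h \<longleftrightarrow> hol_fun_on Ut {x\<in>cpts Ut. \<pi> x \<in> W} (\<lambda>x. h (\<pi> x))))"

definition is_Vspace :: "'a cspace \<Rightarrow> 'i set \<Rightarrow> ('i \<Rightarrow> 'u cspace) \<Rightarrow>
    ('i \<Rightarrow> ('g, 'm) monoid_scheme) \<Rightarrow> ('i \<Rightarrow> 'g \<Rightarrow> 'u \<Rightarrow> 'u) \<Rightarrow> ('i \<Rightarrow> 'u \<Rightarrow> 'a) \<Rightarrow> bool" where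
  "is_Vspace X I Ut G act \<pi> \<longleftrightarrow> is_cspace X \<and>
     (\<forall>\<alpha>\<in>I. galois_cover X (Ut \<alpha>) (G \<alpha>) (act \<alpha>) (\<pi> \<alpha>)) \<and>
     (\<forall>W. openin (ctop X) W \<longrightarrow>
        (\<forall>x\<in>W. \<exists>\<alpha>\<in>I. x \<in> \<pi> \<alpha> ` cpts (Ut \<alpha>) \<and> \<pi> \<alpha> ` cpts (Ut \<alpha>) \<subseteq> W)) \<and>
     (\<forall>\<alpha>\<in>I. \<forall>\<beta>\<in>I. \<pi> \<alpha> ` cpts (Ut \<alpha>) \<subseteq> \<pi> \<beta> ` cpts (Ut \<beta>) \<longrightarrow>
        (\<exists>j hm. hol_open_embedding (Ut \<alpha>) (Ut \<beta>) j \<and>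
           (\<forall>x\<in>cpts (Ut \<alpha>). \<pi> \<beta> (j x) = \<pi> \<alpha> x) \<and>
           hm \<in> hom (G \<alpha>) (G \<beta>) \<and> inj_on hm (carrier (G \<alpha>)) \<and>
           (\<forall>g\<in>carrier (G \<alpha>). \<forall>x\<in>cpts (Ut \<alpha>). j (act \<alpha> g x) = act \<beta> (hm g) (j x))))"

definition V_morphism :: "'b cspace \<Rightarrow> 'a cspace \<Rightarrow> 'i set \<Rightarrow> ('i \<Rightarrow> 'u cspace) \<Rightarrow>
    ('i \<Rightarrow> 'u \<Rightarrow> 'a) \<Rightarrow> ('b \<Rightarrow> 'a) \<Rightarrow> bool" where
  "V_morphism Y X I Ut \<pi> f \<longleftrightarrow> hol_map_on Y (cpts Y) X f \<and>
     (\<forall>y\<in>cpts Y. \<exists>Om \<alpha> \<tau>. y \<in> Om \<and> \<alpha> \<in> I \<and> hol_map_on Y Om (Ut \<alpha>) \<tau> \<and>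
        (\<forall>z\<in>Om. f z = \<pi> \<alpha> (\<tau> z)))"

definition poincare_dist :: "complex \<Rightarrow> complex \<Rightarrow> real" where
  "poincare_dist a b = artanh (cmod ((a - b) / (1 - cnj b * a)))"

definition kob_chain :: "((complex \<Rightarrow> 'a) \<Rightarrow> bool) \<Rightarrow> 'a \<Rightarrow> 'a \<Rightarrow>
    ((complex \<Rightarrow> 'a) \<times> complex \<times> complex) list \<Rightarrow> bool" where
  "kob_chain P p q L \<longleftrightarrow> L \<noteq> [] \<and>
     (\<forall>(g,a,b)\<in>set L. P g \<and> a \<in> ball 0 1 \<and> b \<in> ball 0 1) \<and>
     fst (hd L) (fst (snd (hd L))) = p \<and>
     fst (last L) (snd (snd (last L))) = q \<and>
     (\<forall>i. Suc i < length L \<longrightarrow>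
        fst (L ! i) (snd (snd (L ! i))) = fst (L ! Suc i) (fst (snd (L ! Suc i))))"

definition kob_dist :: "((complex \<Rightarrow> 'a) \<Rightarrow> bool) \<Rightarrow> 'a \<Rightarrow> 'a \<Rightarrow> ereal" where
  "kob_dist P p q = Inf {ereal (\<Sum>(g,a,b)\<leftarrow>L. poincare_dist a b) | L. kob_chain P p q L}"

definition kobayashi :: "'b cspace \<Rightarrow> 'b \<Rightarrow> 'b \<Rightarrow> ereal" where
  "kobayashi Y = kob_dist (\<lambda>g. hol_map_on disc_space (ball 0 1) Y g)"

definition kobayashi_V :: "'a cspace \<Rightarrow> 'i set \<Rightarrow> ('i \<Rightarrow> 'u cspace) \<Rightarrow>
    ('i \<Rightarrow> 'u \<Rightarrow> 'a) \<Rightarrow> 'a \<Rightarrow> 'a \<Rightarrow> ereal" where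
  "kobayashi_V X I Ut \<pi> = kob_dist (\<lambda>g. V_morphism disc_space X I Ut \<pi> g)"

end

theory Submission
  imports Defs "HOL-Complex_Analysis.Complex_Analysis"
begin

lemma cn_open_polydisc:
  assumes "cn_open n W" "a \<in> W"
  shows "\<exists>r>0. \<forall>z\<in>cn n. (\<forall>j<n. cmod (z j - a j) < r) \<longrightarrow> z \<in> W"
proof -
  obtain Ow where O: "open Ow" "W = cn n \<inter> Ow"
    using assms(1) unfolding cn_open_def by (auto simp: openin_open)
  have o1: "openin (product_topology (\<lambda>i. euclidean) UNIV) Ow" using O(1) by (simp add: open_fun_def)
  have o2: "a \<in> Ow" using O assms(2) by blast
  obtain X where X: "a \<in> (\<Pi>\<^sub>E i\<in>UNIV. X i)" "\<forall>i. openin euclidean (X i)" 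
     "finite {i. X i \<noteq> topspace euclidean}" "(\<Pi>\<^sub>E i\<in>UNIV. X i) \<subseteq> Ow"
    using product_topology_open_contains_basis[OF o1 o2] by blast
  have X2: "\<And>i. open (X i)" using X(2) by simp
  have "\<forall>j. \<exists>r>0. ball (a j) r \<subseteq> X j"
  proof
    fix j
    have "a j \<in> X j" using X(1) by (simp add: PiE_iff)
    then show "\<exists>r>0. ball (a j) r \<subseteq> X j" using X2[of j] open_contains_ball by blast
  qed
  from choice[OF this] obtain rr where rr0: "\<forall>j. rr j > 0 \<and> ball (a j) (rr j) \<subseteq> X j" by blast
  then have rr: "\<And>j. rr j > 0" "\<And>j. ball (a j) (rr j) \<subseteq> X j" by auto
  define r where "r = Min (rr ` {..<n} \<union> {1})"
  have r0: "r > 0" unfolding r_def using rr(1) by (subst Min_gr_iff) auto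
  have rle: "r \<le> rr j" if "j < n" for j unfolding r_def using that by (intro Min_le) auto
  show ?thesis
  proof (intro exI[of _ r] conjI r0 ballI impI)
    fix z assume z: "z \<in> cn n" "\<forall>j<n. cmod (z j - a j) < r"
    have "z j \<in> X j" for j
    proof (cases "j < n")
      case True
      then have "z j \<in> ball (a j) (rr j)" using z(2) rle[OF True] by (auto simp: dist_norm norm_minus_commute)
      then show ?thesis using rr(2) by blast
    next
      case False
      then have "z j = a j" using z(1) assms(2) O(2) by (auto simp: cn_def)
      then show ?thesis using X(1) by (simp add: PiE_iff)
    qed
    then have "z \<in> Ow" using X(4) by (auto simp: PiE_iff)
    then show "z \<in> W" using O(2) z(1) by blast
  qed
qed

lemma cn_open_subset: "cn_open n W \<Longrightarrow> W \<subseteq> cn n"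
  unfolding cn_open_def by (meson openin_imp_subset topspace_euclidean_subtopology)

lemma holo_chain:
  fixes h :: "complex \<Rightarrow> nat \<Rightarrow> complex"
  assumes F: "holo_fun n W F" and a: "h t0 \<in> W" and hc: "\<forall>t. h t \<in> cn n"
    and T: "open T" "t0 \<in> T" and cont: "\<forall>j<n. continuous_on T (\<lambda>t. h t j)"
    and der: "\<forall>j<n. ((\<lambda>t. h t j) has_field_derivative d j) (at t0)"
  shows "(\<lambda>t. F (h t)) field_differentiable (at t0)"
proof -
  define a where "a = h t0"
  have Wcn: "W \<subseteq> cn n" using F cn_open_subset unfolding holo_fun_def by blast
  have acn: "a \<in> cn n" using a Wcn a_def by blast
  obtain r where r: "r > 0" "\<forall>z\<in>cn n. (\<forall>j<n. cmod (z j - a j) < r) \<longrightarrow> z \<in> W"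
    using cn_open_polydisc[of n W a] F a a_def unfolding holo_fun_def by blast
  define \<rho> where "\<rho> = r / 2"
  have \<rho>: "\<rho> > 0" "\<rho> < r" using r unfolding \<rho>_def by auto
  have ev1: "\<forall>j\<in>{..<n}. eventually (\<lambda>t. cmod (h t j - a j) < \<rho>) (nhds t0)"
  proof
    fix j assume "j \<in> {..<n}"
    then have "isCont (\<lambda>t. h t j) t0" using cont T continuous_on_eq_continuous_at by blast
    then have "((\<lambda>t. h t j) \<longlongrightarrow> a j) (nhds t0)"
      unfolding a_def isCont_def using tendsto_nhds_iff by (metis continuous_at continuous_within)
    then show "eventually (\<lambda>t. cmod (h t j - a j) < \<rho>) (nhds t0)"
      using \<rho>(1) unfolding tendsto_iff dist_norm by blast
  qed
  have "eventually (\<lambda>t. \<forall>j\<in>{..<n}. cmod (h t j - a j) < \<rho>) (nhds t0)"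
    by (rule eventually_ball_finite) (use ev1 in auto)
  moreover have "eventually (\<lambda>t. t \<in> T) (nhds t0)" using T eventually_nhds_in_open by blast
  ultimately have "eventually (\<lambda>t. t \<in> T \<and> (\<forall>j\<in>{..<n}. cmod (h t j - a j) < \<rho>)) (nhds t0)"
    by (simp add: eventually_conj_iff)
  then obtain \<delta>0 where \<delta>0: "\<delta>0 > 0" "\<forall>t. dist t t0 < \<delta>0 \<longrightarrow> t \<in> T \<and> (\<forall>j\<in>{..<n}. cmod (h t j - a j) < \<rho>)"
    unfolding eventually_nhds_metric by blast
  define \<delta> where "\<delta> = \<delta>0 / 2"
  define Dc where "Dc = cball t0 \<delta>"
  have \<delta>: "\<delta> > 0" using \<delta>0 \<delta>_def by auto
  have t0D: "t0 \<in> Dc" using \<delta> Dc_def by auto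
  have DT: "t \<in> T" and Dh: "\<And>j. j < n \<Longrightarrow> cmod (h t j - a j) < \<rho>" if "t \<in> Dc" for t
    using \<delta>0(2) that \<delta>0(1) unfolding Dc_def \<delta>_def by (auto simp: dist_commute)
  define P where "P i t = (\<lambda>j. if j < i then h t j else a j)" for i t
  have P1: "(P i t)(i := \<zeta>) \<in> W" if "t \<in> Dc" "i < n" "cmod (\<zeta> - a i) < r" for i t \<zeta>
  proof -
    have "(P i t)(i := \<zeta>) \<in> cn n"
      using hc acn that(2) unfolding cn_def P_def by auto
    moreover have "cmod (((P i t)(i := \<zeta>)) j - a j) < r" if "j < n" for j
      using Dh[OF \<open>t \<in> Dc\<close> that] \<rho> r \<open>cmod (\<zeta> - a i) < r\<close> unfolding P_def by auto
    ultimately show ?thesis using r(2) by blast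
  qed
  have P2: "P (Suc i) t = (P i t)(i := h t i)" "P i t = (P i t)(i := a i)" for i t
    unfolding P_def by auto
  have P3: "P 0 t = a" "P n t = h t" for t
    using hc acn unfolding P_def cn_def by auto
  have hcont: "continuous_on Dc (\<lambda>t. h t j)" if "j < n" for j
    using cont that DT by (meson continuous_on_subset subsetI)
  have holo: "(\<lambda>\<zeta>. F ((P i t)(i := \<zeta>))) holomorphic_on ball (a i) r" if "t \<in> Dc" "i < n" for i t
  proof -
    have "(\<lambda>\<zeta>. F ((P i t)(i := \<zeta>))) field_differentiable (at \<zeta>)" if "\<zeta> \<in> ball (a i) r" for \<zeta>
    proof -
      have z: "(P i t)(i := \<zeta>) \<in> W" using P1 \<open>t \<in> Dc\<close> \<open>i < n\<close> that by (auto simp: dist_norm norm_minus_commute)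
      from F z \<open>i < n\<close> have "(\<lambda>s. F (((P i t)(i := \<zeta>))(i := s))) field_differentiable (at (((P i t)(i := \<zeta>)) i))"
        unfolding holo_fun_def by blast
      then show ?thesis by simp
    qed
    then show ?thesis unfolding holomorphic_on_def using field_differentiable_at_within by blast
  qed
  define G where "G i t \<zeta> = F ((P i t)(i := \<zeta>)) / ((\<zeta> - h t i) * (\<zeta> - a i))" for i t \<zeta>
  define K where "K i t = contour_integral (circlepath (a i) \<rho>) (G i t)" for i t
  have joint: "continuous_on (Dc \<times> sphere (a i) \<rho>) (\<lambda>x. G i (fst x) (snd x))" if "i < n" for i
  proof -
    have Fc: "continuous_on W F" using F unfolding holo_fun_def by blast
    have Qc: "continuous_on (Dc \<times> sphere (a i) \<rho>) (\<lambda>x. (P i (fst x))(i := snd x))"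
    proof (intro continuous_on_coordinatewise_then_product)
      fix j
      show "continuous_on (Dc \<times> sphere (a i) \<rho>) (\<lambda>x. ((P i (fst x))(i := snd x)) j)"
      proof (cases "j = i")
        case True then show ?thesis by (simp add: continuous_on_snd)
      next
        case False
        show ?thesis
        proof (cases "j < i")
          case True
          then have "j < n" using \<open>i < n\<close> by simp
          have "continuous_on (Dc \<times> sphere (a i) \<rho>) (\<lambda>x. h (fst x) j)"
            by (rule continuous_on_compose2[OF hcont[OF \<open>j < n\<close>] continuous_on_fst]) auto
          then show ?thesis using True False by (simp add: P_def)
        next
          case False
          then show ?thesis using \<open>j \<noteq> i\<close> by (simp add: P_def)
        qed
      qed
    qed
    have QW: "(P i (fst x))(i := snd x) \<in> W" if "x \<in> Dc \<times> sphere (a i) \<rho>" for x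
      using P1[of "fst x" i "snd x"] that \<open>i < n\<close> \<rho> by (auto simp: dist_norm norm_minus_commute)
    have c1: "continuous_on (Dc \<times> sphere (a i) \<rho>) (\<lambda>x. F ((P i (fst x))(i := snd x)))"
      by (rule continuous_on_compose2[OF Fc Qc]) (use QW in auto)
    have c2: "continuous_on (Dc \<times> sphere (a i) \<rho>) (\<lambda>x. (snd x - h (fst x) i) * (snd x - a i))"
      by (intro continuous_intros continuous_on_compose2[OF hcont[OF \<open>i < n\<close>] continuous_on_fst]) auto
    have nz: "(snd x - h (fst x) i) * (snd x - a i) \<noteq> 0" if "x \<in> Dc \<times> sphere (a i) \<rho>" for x
    proof -
      have "cmod (snd x - a i) = \<rho>" using that by (auto simp: dist_norm norm_minus_commute)
      moreover have "cmod (h (fst x) i - a i) < \<rho>" using Dh that \<open>i < n\<close> by auto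
      ultimately show ?thesis using \<rho> by auto
    qed
    show ?thesis unfolding G_def using c1 c2 nz by (intro continuous_on_divide) auto
  qed
  have Gc: "continuous_on (sphere (a i) \<rho>) (G i t)" if "i < n" "t \<in> Dc" for i t
  proof -
    have "continuous_on ((\<lambda>\<zeta>. (t, \<zeta>)) ` sphere (a i) \<rho>) (\<lambda>x. G i (fst x) (snd x))"
      by (rule continuous_on_subset[OF joint[OF \<open>i < n\<close>]]) (use \<open>t \<in> Dc\<close> in auto)
    then have "continuous_on (sphere (a i) \<rho>) ((\<lambda>x. G i (fst x) (snd x)) \<circ> (\<lambda>\<zeta>. (t, \<zeta>)))"
      by (intro continuous_on_compose continuous_intros)
    then show ?thesis by (simp add: o_def)
  qed
  have cauchy: "F (P (Suc i) t) - F (P i t) = (h t i - a i) * (K i t / (2 * of_real pi * \<i>))"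
    if "t \<in> Dc" "i < n" for i t
  proof -
    define \<phi> where "\<phi> = (\<lambda>\<zeta>. F ((P i t)(i := \<zeta>)))"
    define b where "b = h t i"
    have hol: "\<phi> holomorphic_on cball (a i) \<rho>"
      unfolding \<phi>_def by (rule holomorphic_on_subset[OF holo[OF that]]) (use \<rho> in auto)
    have bn: "cmod (b - a i) < \<rho>" using Dh that unfolding b_def by auto
    have I1: "((\<lambda>u. \<phi> u / (u - b)) has_contour_integral (2 * of_real pi * \<i> * \<phi> b)) (circlepath (a i) \<rho>)"
      by (rule Cauchy_integral_circlepath_simple[OF hol bn])
    have I2: "((\<lambda>u. \<phi> u / (u - a i)) has_contour_integral (2 * of_real pi * \<i> * \<phi> (a i))) (circlepath (a i) \<rho>)"
      by (rule Cauchy_integral_circlepath_simple[OF hol]) (use \<rho> in simp)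
    have I4: "((\<lambda>u. (b - a i) * G i t u) has_contour_integral
        (2 * of_real pi * \<i> * \<phi> b - 2 * of_real pi * \<i> * \<phi> (a i))) (circlepath (a i) \<rho>)"
    proof (rule has_contour_integral_eq[OF has_contour_integral_diff[OF I1 I2]])
      fix x assume "x \<in> path_image (circlepath (a i) \<rho>)"
      then have x: "cmod (x - a i) = \<rho>" using \<rho> by (auto simp: dist_norm norm_minus_commute)
      then have "x \<noteq> b" "x \<noteq> a i" using bn \<rho> by auto
      then show "\<phi> x / (x - b) - \<phi> x / (x - a i) = (b - a i) * G i t x"
        unfolding G_def \<phi>_def b_def[symmetric] by (simp add: field_simps)
    qed
    have I5: "(G i t has_contour_integral K i t) (circlepath (a i) \<rho>)"
      unfolding K_def
      by (rule has_contour_integral_integral[OF contour_integrable_continuous_circlepath])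
         (use Gc[OF that(2,1)] \<rho> in simp)
    have "2 * of_real pi * \<i> * \<phi> b - 2 * of_real pi * \<i> * \<phi> (a i) = (b - a i) * K i t"
      using has_contour_integral_unique[OF I4 has_contour_integral_lmul[OF I5]] .
    moreover have "\<phi> b = F (P (Suc i) t)" "\<phi> (a i) = F (P i t)"
      unfolding \<phi>_def b_def using P2[of i t] by auto
    ultimately show ?thesis unfolding b_def by (simp add: field_simps)
  qed
  have evD: "eventually (\<lambda>t. t \<in> Dc) (at t0)"
    using \<delta> unfolding Dc_def eventually_at by (metis dist_commute less_eq_real_def mem_cball)
  have Klim: "((\<lambda>t. K i t) \<longlongrightarrow> K i t0) (at t0)" if "i < n" for i
  proof -
    have uc: "uniformly_continuous_on (Dc \<times> sphere (a i) \<rho>) (\<lambda>x. G i (fst x) (snd x))"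
      by (rule compact_uniformly_continuous[OF joint[OF that]]) (auto simp: Dc_def intro!: compact_Times)
    have ul: "uniform_limit (sphere (a i) \<rho>) (G i) (G i t0) (at t0)"
      unfolding uniform_limit_iff
    proof (intro allI impI)
      fix e :: real assume "e > 0"
      from uc[unfolded uniformly_continuous_on_def, rule_format, OF this]
      obtain dd where dd: "dd > 0" "\<forall>x\<in>Dc \<times> sphere (a i) \<rho>. \<forall>x'\<in>Dc \<times> sphere (a i) \<rho>.
          dist x' x < dd \<longrightarrow> dist (G i (fst x') (snd x')) (G i (fst x) (snd x)) < e" by blast
      show "\<forall>\<^sub>F t in at t0. \<forall>\<zeta>\<in>sphere (a i) \<rho>. dist (G i t \<zeta>) (G i t0 \<zeta>) < e"
        unfolding eventually_at
      proof (intro exI[of _ "min dd \<delta>"] conjI allI impI ballI)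
        show "min dd \<delta> > 0" using dd \<delta> by simp
        fix t \<zeta> assume t: "t \<noteq> t0 \<and> dist t t0 < min dd \<delta>" and \<zeta>: "\<zeta> \<in> sphere (a i) \<rho>"
        have "t \<in> Dc" using t unfolding Dc_def by (simp add: dist_commute)
        moreover have "dist (t, \<zeta>) (t0, \<zeta>) < dd" using t by (simp add: dist_Pair_Pair)
        ultimately show "dist (G i t \<zeta>) (G i t0 \<zeta>) < e"
          using dd(2) t0D \<zeta> by fastforce
      qed
    qed
    have ev: "\<forall>\<^sub>F t in at t0. G i t contour_integrable_on circlepath (a i) \<rho>"
      using evD by (rule eventually_mono)
         (use Gc[OF that] \<rho> in \<open>auto intro!: contour_integrable_continuous_circlepath\<close>)
    show ?thesis unfolding K_def
      by (rule contour_integral_uniform_limit_circlepath(2)[OF ev ul]) (use \<rho> in auto)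
  qed
  have eq: "eventually (\<lambda>t. (F (h t) - F (h t0)) / (t - t0) =
      (\<Sum>i<n. ((h t i - h t0 i) / (t - t0)) * (K i t / (2 * of_real pi * \<i>)))) (at t0)"
    using evD
  proof (rule eventually_mono)
    fix t assume "t \<in> Dc"
    have "F (h t) - F (h t0) = (\<Sum>i<n. F (P (Suc i) t) - F (P i t))"
      by (subst sum_lessThan_telescope) (simp add: P3 a_def)
    also have "\<dots> = (\<Sum>i<n. (h t i - a i) * (K i t / (2 * of_real pi * \<i>)))"
      by (rule sum.cong) (use cauchy \<open>t \<in> Dc\<close> in auto)
    finally show "(F (h t) - F (h t0)) / (t - t0) =
      (\<Sum>i<n. ((h t i - h t0 i) / (t - t0)) * (K i t / (2 * of_real pi * \<i>)))"
      by (simp add: sum_divide_distrib a_def mult_ac)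
  qed
  have lim: "((\<lambda>t. \<Sum>i<n. ((h t i - h t0 i) / (t - t0)) * (K i t / (2 * of_real pi * \<i>))) \<longlongrightarrow>
      (\<Sum>i<n. d i * (K i t0 / (2 * of_real pi * \<i>)))) (at t0)"
  proof (intro tendsto_sum tendsto_mult tendsto_divide tendsto_const)
    fix i assume "i \<in> {..<n}"
    then show "((\<lambda>t. (h t i - h t0 i) / (t - t0)) \<longlongrightarrow> d i) (at t0)"
      using der \<open>i \<in> {..<n}\<close> unfolding has_field_derivative_iff by auto
    show "((\<lambda>t. K i t) \<longlongrightarrow> K i t0) (at t0)" using Klim \<open>i \<in> {..<n}\<close> by blast
  qed auto
  have "((\<lambda>t. F (h t)) has_field_derivative (\<Sum>i<n. d i * (K i t0 / (2 * of_real pi * \<i>)))) (at t0)"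
    unfolding has_field_derivative_iff
    by (rule Lim_transform_eventually[OF lim]) (use eq in \<open>simp add: eventually_mono\<close>)
  then show ?thesis unfolding field_differentiable_def by blast
qed


lemma holo_chain':
  fixes h :: "complex \<Rightarrow> nat \<Rightarrow> complex"
  assumes F: "holo_fun n W F" and a: "h t0 \<in> W" and hc: "\<forall>t. h t \<in> cn n"
    and T: "open T" "t0 \<in> T" and cont: "\<forall>j<n. continuous_on T (\<lambda>t. h t j)"
    and der: "\<forall>j<n. (\<lambda>t. h t j) field_differentiable (at t0)"
  shows "(\<lambda>t. F (h t)) field_differentiable (at t0)"
  using holo_chain[OF F a hc T cont, of "\<lambda>j. deriv (\<lambda>t. h t j) t0"] der
  by (simp add: DERIV_deriv_iff_field_differentiable)

lemma chart_props:
  assumes "is_cspace Y" "(U,\<phi>,n,D,A) \<in> catlas Y"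
  shows "openin (ctop Y) U" "inj_on \<phi> U" "\<And>y. y \<in> U \<Longrightarrow> \<phi> y \<in> cn n"
    "\<And>y. y \<in> U \<Longrightarrow> inv_into U \<phi> (\<phi> y) = y"
proof -
  have h: "openin (ctop Y) U" "analytic_set n D A" "homeomorphic_map (subtopology (ctop Y) U) (top_of_set A) \<phi>"
    using assms unfolding is_cspace_def by fastforce+
  show "openin (ctop Y) U" using h(1) .
  have Usub: "U \<subseteq> cpts Y" using h(1) openin_subset by blast
  have ts: "topspace (subtopology (ctop Y) U) = U" using Usub by auto
  show inj: "inj_on \<phi> U" using homeomorphic_imp_injective_map[OF h(3)] ts by simp
  have "\<phi> ` U = A" using homeomorphic_imp_surjective_map[OF h(3)] ts by simp
  moreover have "A \<subseteq> cn n" using h(2) cn_open_subset unfolding analytic_set_def by blast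
  ultimately show "\<And>y. y \<in> U \<Longrightarrow> \<phi> y \<in> cn n" by blast
  show "\<And>y. y \<in> U \<Longrightarrow> inv_into U \<phi> (\<phi> y) = y" using inj by simp
qed

lemma chart_exists:
  assumes "is_cspace Y" "y \<in> cpts Y"
  obtains U \<phi> n D A where "(U,\<phi>,n,D,A) \<in> catlas Y" "y \<in> U"
  using assms unfolding is_cspace_def by fastforce

lemma disc_space_simps:
  "ctop disc_space = top_of_set (ball 0 1)"
  "cpts disc_space = ball 0 1"
  "catlas disc_space = {(ball 0 1, disc_chart, 1, disc_chart ` ball 0 1, disc_chart ` ball 0 1)}"
  by (auto simp: disc_space_def)

lemma disc_chart_inj: "inj disc_chart"
  by (rule injI) (metis disc_chart_def)

lemma disc_chart_inv: "t \<in> S \<Longrightarrow> inv_into S disc_chart (disc_chart t) = t"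
  using disc_chart_inj by (simp add: inj_on_subset)

lemma disc_chart_0 [simp]: "disc_chart t 0 = t"
  by (simp add: disc_chart_def)

lemma disc_chart_upd [simp]: "(disc_chart t)(0 := s) = disc_chart s"
  by (auto simp: disc_chart_def)

lemma disc_chart_cn: "disc_chart t \<in> cn 1"
  by (auto simp: disc_chart_def cn_def)

lemma cn1_eq: "z \<in> cn 1 \<Longrightarrow> z = disc_chart (z 0)"
  by (auto simp: disc_chart_def cn_def)

lemma disc_chart_cont: "continuous_on S disc_chart"
  unfolding disc_chart_def
  apply (intro continuous_on_coordinatewise_then_product)
  subgoal for i by (cases "i = 0") (auto intro: continuous_intros)
  done

lemma disc_chart_open: "open V \<Longrightarrow> cn_open 1 (disc_chart ` V)"
proof -
  assume V: "open V"
  have "open {z::nat\<Rightarrow>complex. z 0 \<in> V}"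
    using open_vimage[OF V continuous_on_product_coordinates[of 0]] by (simp add: vimage_def)
  moreover have "disc_chart ` V = cn 1 \<inter> {z. z 0 \<in> V}"
  proof
    show "disc_chart ` V \<subseteq> cn 1 \<inter> {z. z 0 \<in> V}" using disc_chart_cn by auto
    show "cn 1 \<inter> {z. z 0 \<in> V} \<subseteq> disc_chart ` V"
    proof
      fix z assume "z \<in> cn 1 \<inter> {z. z 0 \<in> V}"
      then show "z \<in> disc_chart ` V" using cn1_eq[of z] by (metis IntD1 IntD2 mem_Collect_eq rev_image_eqI)
    qed
  qed
  ultimately show ?thesis unfolding cn_open_def openin_open by blast
qed

lemma cn_open_disc_vimage:
  assumes "cn_open 1 W" shows "open {s. disc_chart s \<in> W}"
proof -
  obtain Ow where Ow: "open Ow" "W = cn 1 \<inter> Ow" using assms unfolding cn_open_def openin_open by blast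
  have "{s. disc_chart s \<in> W} = disc_chart -` Ow" using Ow(2) disc_chart_cn by auto
  then show ?thesis using open_vimage[OF Ow(1) disc_chart_cont] by simp
qed


lemma hol_comp_disc:
  assumes Y: "is_cspace Y" and g: "hol_map_on disc_space O1 Y g" and k: "hol_map_on Y O2 Z k"
  shows "hol_map_on disc_space {t\<in>O1. g t \<in> O2} Z (\<lambda>t. k (g t))"
proof -
  define Om where "Om = {t\<in>O1. g t \<in> O2}"
  have O1o: "openin (top_of_set (ball 0 1)) O1" and
    gc: "continuous_map (subtopology (top_of_set (ball 0 1)) O1) (ctop Y) g"
    using g unfolding hol_map_on_def disc_space_simps by auto
  have gh: "holo_map 1 (disc_chart ` {y\<in>ball 0 1 \<inter> O1. g y \<in> Uy}) ny
      (\<lambda>z. py (g (inv_into (ball 0 1) disc_chart z)))"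
    if "(Uy, py, ny, Dy, Ay) \<in> catlas Y" for Uy py ny Dy Ay
    using g that unfolding hol_map_on_def disc_space_simps by fastforce
  have O2o: "openin (ctop Y) O2" and kc: "continuous_map (subtopology (ctop Y) O2) (ctop Z) k"
    using k unfolding hol_map_on_def by auto
  have kh: "holo_map ny (py ` {y\<in>Uy \<inter> O2. k y \<in> V}) m (\<lambda>w. \<psi> (k (inv_into Uy py w)))"
    if "(Uy, py, ny, Dy, Ay) \<in> catlas Y" "(V, \<psi>, m, E, B) \<in> catlas Z" for Uy py ny Dy Ay V \<psi> m E B
    using k that unfolding hol_map_on_def by fastforce
  have O1b: "O1 \<subseteq> ball 0 1" using O1o openin_subset by fastforce
  have O1open: "open O1" using openin_open_trans[OF O1o open_ball] .
  have ts1: "topspace (subtopology (top_of_set (ball 0 1)) O1) = O1" using O1b by auto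
  have pre_open: "open {t\<in>O1. g t \<in> V}" if "openin (ctop Y) V" for V
  proof -
    have "openin (subtopology (top_of_set (ball 0 1)) O1) {t\<in>O1. g t \<in> V}"
      using openin_continuous_map_preimage[OF gc that] by (simp only: ts1)
    then have "openin (top_of_set (ball 0 1)) {t\<in>O1. g t \<in> V}"
      using openin_trans_full O1o by blast
    then show ?thesis using openin_open_trans open_ball by blast
  qed
  have gY: "g t \<in> cpts Y" if "t \<in> O1" for t
  proof -
    have "g \<in> topspace (subtopology (top_of_set (ball 0 1)) O1) \<rightarrow> cpts Y"
      using gc[unfolded continuous_map_def] by (rule conjunct1)
    then show ?thesis using that unfolding ts1 by blast
  qed
  have Omopen: "open Om" unfolding Om_def using pre_open[OF O2o] .
  have OmO1: "Om \<subseteq> O1" unfolding Om_def by auto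
  have part_a: "openin (ctop disc_space) Om"
    unfolding disc_space_simps openin_open by (intro exI[of _ Om]) (use Omopen OmO1 O1b in auto)
  have part_b: "continuous_map (subtopology (ctop disc_space) Om) (ctop Z) (\<lambda>t. k (g t))"
  proof -
    have g1: "continuous_map (subtopology (top_of_set (ball 0 1)) Om) (subtopology (ctop Y) O2) g"
      by (rule continuous_map_into_subtopology[OF continuous_map_from_subtopology_mono[OF gc OmO1]])
         (auto simp: Om_def)
    show ?thesis using continuous_map_compose[OF g1 kc] by (simp add: o_def disc_space_simps)
  qed
  have part_c: "holo_map 1 (disc_chart ` {y\<in>ball 0 1 \<inter> Om. k (g y) \<in> V}) m
      (\<lambda>z. \<psi> (k (g (inv_into (ball 0 1) disc_chart z))))"
    if VZ: "(V, \<psi>, m, E, B) \<in> catlas Z" for V \<psi> m E B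
  proof -
    note VZ = that
    define S where "S = disc_chart ` {y\<in>ball 0 1 \<inter> Om. k (g y) \<in> V}"
    have val: "\<psi> (k (g t)) \<in> cn m" if tt: "t \<in> ball 0 1 \<inter> Om" "k (g t) \<in> V" for t
    proof -
      have "t \<in> O1" using tt OmO1 by blast
      obtain Uy py ny Dy Ay where ch: "(Uy, py, ny, Dy, Ay) \<in> catlas Y" "g t \<in> Uy"
        using chart_exists[OF Y gY[OF \<open>t \<in> O1\<close>]] by blast
      have "py (g t) \<in> py ` {y\<in>Uy \<inter> O2. k y \<in> V}" using ch tt by (auto simp: Om_def)
      then have "\<psi> (k (inv_into Uy py (py (g t)))) \<in> cn m"
        using kh[OF ch(1) VZ] unfolding holo_map_def by blast
      then show ?thesis using chart_props(4)[OF Y ch(1) ch(2)] by simp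
    qed
    have hol: "holo_on_set 1 S (\<lambda>z. \<psi> (k (g (inv_into (ball 0 1) disc_chart z))) i)" if im: "i < m" for i
      unfolding holo_on_set_def
    proof
      fix z0 assume "z0 \<in> S"
      then obtain t0 where t0: "z0 = disc_chart t0" "t0 \<in> ball 0 1 \<inter> Om" "k (g t0) \<in> V"
        unfolding S_def by blast
      have t0O1: "t0 \<in> O1" using t0 OmO1 by blast
      obtain Uy py ny Dy Ay where ch: "(Uy, py, ny, Dy, Ay) \<in> catlas Y" "g t0 \<in> Uy"
        using chart_exists[OF Y gY[OF t0O1]] by blast
      define S2 where "S2 = py ` {y\<in>Uy \<inter> O2. k y \<in> V}"
      have w0S2: "py (g t0) \<in> S2" using ch t0 unfolding S2_def Om_def by auto
      have "holo_on_set ny S2 (\<lambda>w. \<psi> (k (inv_into Uy py w)) i)"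
        using kh[OF ch(1) VZ] im unfolding holo_map_def S2_def by blast
      then obtain W2 F2 where W2: "py (g t0) \<in> W2" "holo_fun ny W2 F2"
          "\<forall>w\<in>W2 \<inter> S2. \<psi> (k (inv_into Uy py w)) i = F2 w"
        using w0S2 unfolding holo_on_set_def by blast
      define S1 where "S1 = disc_chart ` {y\<in>ball 0 1 \<inter> O1. g y \<in> Uy}"
      have z0S1: "z0 \<in> S1" using t0 t0O1 ch unfolding S1_def by auto
      have ex1: "\<forall>j. \<exists>W F. j < ny \<longrightarrow> z0 \<in> W \<and> holo_fun 1 W F \<and>
          (\<forall>w\<in>W \<inter> S1. py (g (inv_into (ball 0 1) disc_chart w)) j = F w)"
      proof
        fix j
        show "\<exists>W F. j < ny \<longrightarrow> z0 \<in> W \<and> holo_fun 1 W F \<and>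
          (\<forall>w\<in>W \<inter> S1. py (g (inv_into (ball 0 1) disc_chart w)) j = F w)"
        proof (cases "j < ny")
          case True
          then have "holo_on_set 1 S1 (\<lambda>z. py (g (inv_into (ball 0 1) disc_chart z)) j)"
            using gh[OF ch(1)] unfolding holo_map_def S1_def by blast
          then show ?thesis using z0S1 unfolding holo_on_set_def by blast
        qed auto
      qed
      obtain W1 where "\<forall>j. \<exists>F. j < ny \<longrightarrow> z0 \<in> W1 j \<and> holo_fun 1 (W1 j) F \<and>
          (\<forall>w\<in>W1 j \<inter> S1. py (g (inv_into (ball 0 1) disc_chart w)) j = F w)"
        using choice[OF ex1] by blast
      from choice[OF this] obtain F1 where W1: "\<And>j. j < ny \<Longrightarrow> z0 \<in> W1 j \<and> holo_fun 1 (W1 j) (F1 j) \<and>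
          (\<forall>w\<in>W1 j \<inter> S1. py (g (inv_into (ball 0 1) disc_chart w)) j = F1 j w)"
        by blast
      define U1 where "U1 j = {s. disc_chart s \<in> W1 j}" for j
      define f1 where "f1 j s = F1 j (disc_chart s)" for j s
      define \<Phi> where "\<Phi> s = (\<lambda>j. if j < ny then f1 j s else 0)" for s
      define N where "N = {t\<in>O1. g t \<in> Uy}"
      have Nopen: "open N" using pre_open chart_props(1)[OF Y ch(1)] unfolding N_def by blast
      have U1open: "open (U1 j)" if "j < ny" for j
        using cn_open_disc_vimage W1[OF that] unfolding U1_def holo_fun_def by blast
      define U1a where "U1a = N \<inter> (\<Inter>j\<in>{..<ny}. U1 j)"
      have U1a_open: "open U1a" unfolding U1a_def using Nopen U1open by (intro open_Int open_INT) auto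
      have f1c: "continuous_on (U1 j) (f1 j)" if "j < ny" for j
      proof -
        have "continuous_on (W1 j) (F1 j)" using W1[OF that] unfolding holo_fun_def by blast
        then show ?thesis unfolding f1_def
          by (rule continuous_on_compose2[OF _ disc_chart_cont]) (auto simp: U1_def)
      qed
      have \<Phi>c: "continuous_on U1a \<Phi>"
        unfolding \<Phi>_def
      proof (intro continuous_on_coordinatewise_then_product)
        fix j
        show "continuous_on U1a (\<lambda>s. if j < ny then f1 j s else 0)"
        proof (cases "j < ny")
          case True
          then show ?thesis using continuous_on_subset[OF f1c[OF True], of U1a] by (auto simp: U1a_def)
        qed (auto intro: continuous_intros)
      qed
      have \<Phi>cn: "\<Phi> s \<in> cn ny" for s by (simp add: \<Phi>_def cn_def)
      have \<Phi>cn_all: "\<forall>t. \<Phi> t \<in> cn ny" using \<Phi>cn by blast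
      obtain Ow2 where Ow2: "open Ow2" "W2 = cn ny \<inter> Ow2"
        using W2(2) unfolding holo_fun_def cn_open_def openin_open by blast
      define T0 where "T0 = U1a \<inter> \<Phi> -` Ow2"
      have T0open: "open T0"
        using continuous_on_open_vimage[OF U1a_open, THEN iffD1, OF \<Phi>c, rule_format, OF Ow2(1)]
        by (simp add: T0_def Int_commute)
      have \<Phi>T0: "\<Phi> s \<in> W2" if "s \<in> T0" for s using that Ow2 \<Phi>cn by (auto simp: T0_def)
      have T0U1a: "T0 \<subseteq> U1a" unfolding T0_def by blast
      have \<Phi>eq: "\<Phi> s = py (g s)" if "s \<in> U1a" "s \<in> ball 0 1" for s
      proof
        fix j
        show "\<Phi> s j = py (g s) j"
        proof (cases "j < ny")
          case True
          have "disc_chart s \<in> W1 j" using that True unfolding U1a_def U1_def by blast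
          moreover have "disc_chart s \<in> S1" using that unfolding S1_def U1a_def N_def by blast
          ultimately have "py (g (inv_into (ball 0 1) disc_chart (disc_chart s))) j = F1 j (disc_chart s)"
            using W1[OF True] by blast
          then show ?thesis using True disc_chart_inv[OF that(2)] by (simp add: \<Phi>_def f1_def)
        next
          case False
          have "g s \<in> Uy" using that unfolding U1a_def N_def by blast
          then have "py (g s) \<in> cn ny" using chart_props(3)[OF Y ch(1)] by blast
          then show ?thesis using False by (simp add: \<Phi>_def cn_def)
        qed
      qed
      have t0U1a: "t0 \<in> U1a"
        using t0 t0O1 ch W1 unfolding U1a_def N_def U1_def by auto
      have t0T0: "t0 \<in> T0"
        using t0U1a \<Phi>eq[OF t0U1a] t0(2) W2(1) Ow2(2) unfolding T0_def by auto
      show "\<exists>W F. z0 \<in> W \<and> holo_fun 1 W F \<and>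
          (\<forall>w\<in>W \<inter> S. \<psi> (k (g (inv_into (ball 0 1) disc_chart w))) i = F w)"
      proof (intro exI conjI)
        show "z0 \<in> disc_chart ` T0" using t0T0 t0(1) by blast
        have F2c: "continuous_on W2 F2" using W2(2) unfolding holo_fun_def by blast
        have c1: "continuous_on T0 (\<lambda>s. F2 (\<Phi> s))"
          by (rule continuous_on_compose2[OF F2c continuous_on_subset[OF \<Phi>c T0U1a]]) (use \<Phi>T0 in auto)
        have c2: "continuous_on (disc_chart ` T0) (\<lambda>z. F2 (\<Phi> (z 0)))"
          by (rule continuous_on_compose2[OF c1 continuous_on_subset[OF continuous_on_product_coordinates[of 0]]])
             auto
        have d: "(\<lambda>t. F2 (\<Phi> t)) field_differentiable (at s)" if "s \<in> T0" for s
        proof (rule holo_chain'[of ny W2 F2 \<Phi> s T0, OF W2(2) \<Phi>T0[OF that] \<Phi>cn_all T0open that])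
          show "\<forall>j<ny. continuous_on T0 (\<lambda>t. \<Phi> t j)"
          proof (intro allI impI)
            fix j assume "j < ny"
            then show "continuous_on T0 (\<lambda>t. \<Phi> t j)"
              using continuous_on_subset[OF f1c[OF \<open>j < ny\<close>], of T0] T0U1a
              by (auto simp: \<Phi>_def U1a_def)
          qed
          show "\<forall>j<ny. (\<lambda>t. \<Phi> t j) field_differentiable (at s)"
          proof (intro allI impI)
            fix j assume j: "j < ny"
            have "disc_chart s \<in> W1 j" using that j T0U1a unfolding U1a_def U1_def by blast
            then have "(\<lambda>t. F1 j ((disc_chart s)(0 := t))) field_differentiable (at (disc_chart s 0))"
              using W1[OF j] unfolding holo_fun_def by blast
            then show "(\<lambda>t. \<Phi> t j) field_differentiable (at s)"
              using j by (simp add: \<Phi>_def f1_def)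
          qed
        qed
        show "holo_fun 1 (disc_chart ` T0) (\<lambda>z. F2 (\<Phi> (z 0)))"
          unfolding holo_fun_def
        proof (intro conjI ballI allI impI)
          show "cn_open 1 (disc_chart ` T0)" using disc_chart_open[OF T0open] .
          show "continuous_on (disc_chart ` T0) (\<lambda>z. F2 (\<Phi> (z 0)))" using c2 .
          fix z i' assume z: "z \<in> disc_chart ` T0" and i': "i' < (1::nat)"
          then obtain s where s: "z = disc_chart s" "s \<in> T0" by blast
          show "(\<lambda>t. F2 (\<Phi> ((z(i' := t)) 0))) field_differentiable (at (z i'))"
            using d[OF s(2)] s(1) i' by simp
        qed
        show "\<forall>w\<in>disc_chart ` T0 \<inter> S. \<psi> (k (g (inv_into (ball 0 1) disc_chart w))) i = F2 (\<Phi> (w 0))"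
        proof
          fix w assume w: "w \<in> disc_chart ` T0 \<inter> S"
          then obtain s where s: "w = disc_chart s" "s \<in> T0" by blast
          obtain s' where s': "w = disc_chart s'" "s' \<in> ball 0 1 \<inter> Om" "k (g s') \<in> V"
            using w unfolding S_def by blast
          have "s = s'" using s s' disc_chart_inj by (metis injD)
          then have sb: "s \<in> ball 0 1" "s \<in> Om" "k (g s) \<in> V" using s' by auto
          have pe: "\<Phi> s = py (g s)" using \<Phi>eq[OF _ sb(1)] s(2) T0U1a by blast
          have gsU: "g s \<in> Uy" using s(2) T0U1a unfolding U1a_def N_def by blast
          have "py (g s) \<in> W2 \<inter> S2"
            using \<Phi>T0[OF s(2)] pe gsU sb unfolding S2_def Om_def by auto
          then have "\<psi> (k (inv_into Uy py (py (g s)))) i = F2 (py (g s))" using W2(3) by blast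
          then show "\<psi> (k (g (inv_into (ball 0 1) disc_chart w))) i = F2 (\<Phi> (w 0))"
            using chart_props(4)[OF Y ch(1) gsU] disc_chart_inv[OF sb(1)] s(1) pe by simp
        qed
      qed
    qed
    show ?thesis unfolding holo_map_def S_def[symmetric]
    proof (intro conjI ballI allI impI)
      fix z assume "z \<in> S"
      then obtain t where "z = disc_chart t" "t \<in> ball 0 1 \<inter> Om" "k (g t) \<in> V" unfolding S_def by blast
      then show "\<psi> (k (g (inv_into (ball 0 1) disc_chart z))) \<in> cn m"
        using val disc_chart_inv by auto
    qed (use hol in auto)
  qed
  show ?thesis unfolding Om_def[symmetric] hol_map_on_def
  proof (intro conjI)
    show "openin (ctop disc_space) Om" using part_a .
    show "continuous_map (subtopology (ctop disc_space) Om) (ctop Z) (\<lambda>t. k (g t))" using part_b .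
    show "\<forall>(U, \<phi>, n, D, A)\<in>catlas disc_space. \<forall>(V, \<psi>, m, E, B)\<in>catlas Z.
        holo_map n (\<phi> ` {y \<in> U \<inter> Om. k (g y) \<in> V}) m (\<lambda>z. \<psi> (k (g (inv_into U \<phi> z))))"
      unfolding disc_space_simps
    proof (intro ballI)
      fix c :: "complex chart" assume "c \<in> {(ball 0 1, disc_chart, 1, disc_chart ` ball 0 1, disc_chart ` ball 0 1)}"
      then have c: "c = (ball 0 1, disc_chart, 1, disc_chart ` ball 0 1, disc_chart ` ball 0 1)" by simp
      show "case c of (U, \<phi>, n, D, A) \<Rightarrow> \<forall>(V, \<psi>, m, E, B)\<in>catlas Z.
          holo_map n (\<phi> ` {y \<in> U \<inter> Om. k (g y) \<in> V}) m (\<lambda>z. \<psi> (k (g (inv_into U \<phi> z))))"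
        unfolding c prod.case
      proof (intro ballI)
        fix v assume v: "v \<in> catlas Z"
        obtain V \<psi> m E B where vv: "v = (V, \<psi>, m, E, B)" by (cases v) auto
        show "case v of (V, \<psi>, m, E, B) \<Rightarrow> holo_map 1 (disc_chart ` {y \<in> ball 0 1 \<inter> Om. k (g y) \<in> V}) m
             (\<lambda>z. \<psi> (k (g (inv_into (ball 0 1) disc_chart z))))"
          unfolding vv prod.case by (rule part_c) (use v vv in simp)
      qed
    qed
  qed
qed


lemma V_morphism_comp:
  assumes Y: "is_cspace Y" and f: "V_morphism Y X I Ut \<pi> f"
    and g: "hol_map_on disc_space (ball 0 1) Y g"
  shows "V_morphism disc_space X I Ut \<pi> (\<lambda>t. f (g t))"
proof -
  have gc: "continuous_map (subtopology (top_of_set (ball 0 1)) (ball 0 1)) (ctop Y) g"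
    using g unfolding hol_map_on_def disc_space_simps by auto
  have gY: "g t \<in> cpts Y" if "t \<in> ball 0 1" for t
  proof -
    have "g \<in> topspace (subtopology (top_of_set (ball 0 1)) (ball 0 1)) \<rightarrow> cpts Y"
      using gc[unfolded continuous_map_def] by (rule conjunct1)
    then show ?thesis using that by auto
  qed
  have fh: "hol_map_on Y (cpts Y) X f" using f unfolding V_morphism_def by blast
  have eqb: "{t \<in> ball 0 1. g t \<in> cpts Y} = ball 0 1" using gY by blast
  have part1: "hol_map_on disc_space (cpts disc_space) X (\<lambda>t. f (g t))"
    using hol_comp_disc[OF Y g fh] unfolding eqb by (simp only: disc_space_simps(2))
  have part2: "\<exists>Om \<alpha> \<tau>. t \<in> Om \<and> \<alpha> \<in> I \<and> hol_map_on disc_space Om (Ut \<alpha>) \<tau> \<and>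
        (\<forall>z\<in>Om. f (g z) = \<pi> \<alpha> (\<tau> z))" if t: "t \<in> cpts disc_space" for t
  proof -
    have "t \<in> ball 0 1" using t disc_space_simps by simp
    then obtain Om \<alpha> \<tau> where lift: "g t \<in> Om" "\<alpha> \<in> I" "hol_map_on Y Om (Ut \<alpha>) \<tau>" "\<forall>z\<in>Om. f z = \<pi> \<alpha> (\<tau> z)"
      using f gY unfolding V_morphism_def by blast
    show ?thesis
    proof (intro exI conjI)
      show "t \<in> {s \<in> ball 0 1. g s \<in> Om}" using \<open>t \<in> ball 0 1\<close> lift(1) by blast
      show "\<alpha> \<in> I" using lift(2) .
      show "hol_map_on disc_space {s \<in> ball 0 1. g s \<in> Om} (Ut \<alpha>) (\<lambda>s. \<tau> (g s))"
        using hol_comp_disc[OF Y g lift(3)] .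
      show "\<forall>z\<in>{s \<in> ball 0 1. g s \<in> Om}. f (g z) = \<pi> \<alpha> (\<tau> (g z))" using lift(4) by blast
    qed
  qed
  show ?thesis unfolding V_morphism_def using part1 part2 by blast
qed

theorem lemma3p4:
  fixes X :: "'a cspace" and Y :: "'b cspace" and I :: "'i set"
    and Ut :: "'i \<Rightarrow> 'u cspace" and G :: "'i \<Rightarrow> ('g, 'm) monoid_scheme"
    and act :: "'i \<Rightarrow> 'g \<Rightarrow> 'u \<Rightarrow> 'u" and \<pi> :: "'i \<Rightarrow> 'u \<Rightarrow> 'a"
    and f :: "'b \<Rightarrow> 'a"
  assumes "is_Vspace X I Ut G act \<pi>"
    and "is_cspace Y"
    and "V_morphism Y X I Ut \<pi> f"
    and "p \<in> cpts Y" and "q \<in> cpts Y" and "p \<noteq> q"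
  shows "kobayashi_V X I Ut \<pi> (f p) (f q) \<le> kobayashi Y p q"
proof -
  note Y = assms(2) and fV = assms(3)
  define hm where "hm x = ((\<lambda>t. f (fst x t)), fst (snd x), snd (snd x))"
    for x :: "(complex \<Rightarrow> 'b) \<times> complex \<times> complex"
  show ?thesis
    unfolding kobayashi_V_def kobayashi_def kob_dist_def
  proof (rule Inf_mono)
    fix m assume "m \<in> {ereal (\<Sum>(g, a, b)\<leftarrow>L. poincare_dist a b) |L.
        kob_chain (hol_map_on disc_space (ball 0 1) Y) p q L}"
    then obtain L where L: "m = ereal (\<Sum>(g, a, b)\<leftarrow>L. poincare_dist a b)"
      "kob_chain (hol_map_on disc_space (ball 0 1) Y) p q L" by blast
    define L' where "L' = map hm L"
    have sum: "(\<Sum>(g, a, b)\<leftarrow>L'. poincare_dist a b) = (\<Sum>(g, a, b)\<leftarrow>L. poincare_dist a b)"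
      unfolding L'_def hm_def by (induct L) (auto simp: case_prod_beta)
    have ne: "L \<noteq> []" using L(2) unfolding kob_chain_def by blast
    have kc: "kob_chain (V_morphism disc_space X I Ut \<pi>) (f p) (f q) L'"
      unfolding kob_chain_def
    proof (intro conjI allI impI)
      show "L' \<noteq> []" using ne unfolding L'_def by simp
      show "\<forall>(g, a, b)\<in>set L'. V_morphism disc_space X I Ut \<pi> g \<and> a \<in> ball 0 1 \<and> b \<in> ball 0 1"
      proof (clarify)
        fix g' a b assume "(g', a, b) \<in> set L'"
        then obtain x where x: "x \<in> set L" "(g', a, b) = hm x" unfolding L'_def by auto
        obtain g0 a0 b0 where x0: "x = (g0, a0, b0)" by (cases x) auto
        have "hol_map_on disc_space (ball 0 1) Y g0 \<and> a0 \<in> ball 0 1 \<and> b0 \<in> ball 0 1"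
          using L(2) x(1) x0 unfolding kob_chain_def by fastforce
        moreover have "g' = (\<lambda>t. f (g0 t))" "a = a0" "b = b0" using x(2) x0 by (auto simp: hm_def)
        ultimately show "V_morphism disc_space X I Ut \<pi> g' \<and> a \<in> ball 0 1 \<and> b \<in> ball 0 1"
          using V_morphism_comp[OF Y fV] by blast
      qed
      show "fst (hd L') (fst (snd (hd L'))) = f p"
        using L(2) ne unfolding kob_chain_def L'_def by (simp add: hd_map hm_def)
      show "fst (last L') (snd (snd (last L'))) = f q"
        using L(2) ne unfolding kob_chain_def L'_def by (simp add: last_map hm_def)
      fix i assume i: "Suc i < length L'"
      then show "fst (L' ! i) (snd (snd (L' ! i))) = fst (L' ! Suc i) (fst (snd (L' ! Suc i)))"
        using L(2) unfolding kob_chain_def L'_def by (simp add: hm_def)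
    qed
    show "\<exists>n\<in>{ereal (\<Sum>(g, a, b)\<leftarrow>L. poincare_dist a b) |L.
        kob_chain (V_morphism disc_space X I Ut \<pi>) (f p) (f q) L}. n \<le> m"
      using kc sum L(1) by (intro bexI[of _ m]) (auto intro!: exI[of _ L'])
  qed
qed

end
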